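(* Let $X$ be an infinite-dimensional complex Banach space and let $\phi:\mathcal{B}(X)\to\mathcal{B}(X)$ be a surjective map such that $K(\phi(T)\phi(S)+\phi(S)\phi(T))=K(TS+ST)$ for all $T,S\in\mathcal{B}(X)$. Then for every $F\in\mathcal{B}(X)$, $\phi(F)$ has rank one if and only if $F$ has rank one.
   Context: $\mathcal{B}(X)$ denotes the algebra of all bounded linear operators on $X$. For $T\in\mathcal{B}(X)$, the analytic core $K(T)$ is the set of all $x\in X$ for which there exist $\delta>0$ and a sequence $(x_n)_{n\ge 0}\subset X$ with $x_0=x$, $Tx_{n+1}=x_n$ and $\|x_n\|\le \delta^n\|x\|$ for all $n\ge 0$. *)

theory Defs
  imports "HOL-Analysis.Analysis"
begin

text \<open>Complex vector spaces / complex Banach spaces (not in the distribution library;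
  modelled as in the AFP entry Complex_Bounded_Operators): a real Banach space whose
  real scalar multiplication is the restriction of a complex one, with absolutely
  homogeneous norm.\<close>

class scaleC =
  fixes scaleC :: "complex \<Rightarrow> 'a \<Rightarrow> 'a" (infixr "*\<^sub>C" 75)

class complex_banach = scaleC + banach +
  assumes scaleC_add_right: "a *\<^sub>C (x + y) = a *\<^sub>C x + a *\<^sub>C y"
    and scaleC_add_left: "(a + b) *\<^sub>C x = a *\<^sub>C x + b *\<^sub>C x"
    and scaleC_scaleC: "a *\<^sub>C (b *\<^sub>C x) = (a * b) *\<^sub>C x"
    and scaleC_one: "1 *\<^sub>C x = x"
    and scaleR_scaleC: "r *\<^sub>R x = (complex_of_real r) *\<^sub>C x"
    and norm_scaleC: "norm (a *\<^sub>C x) = cmod a * norm x"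

definition BX :: "('a::complex_banach \<Rightarrow> 'a) set" where
  "BX = {T. bounded_linear T \<and> (\<forall>c x. T (c *\<^sub>C x) = c *\<^sub>C T x)}"

definition complex_finite_dim :: "'a::complex_banach itself \<Rightarrow> bool" where
  "complex_finite_dim _ \<longleftrightarrow>
     (\<exists>B::'a set. finite B \<and> (\<forall>x. \<exists>c. x = (\<Sum>b\<in>B. c b *\<^sub>C b)))"

definition analytic_core :: "('a::complex_banach \<Rightarrow> 'a) \<Rightarrow> 'a set" where
  "analytic_core T = {x. \<exists>\<delta>>0. \<exists>xs::nat \<Rightarrow> 'a. xs 0 = x \<and>
      (\<forall>n. T (xs (Suc n)) = xs n) \<and> (\<forall>n. norm (xs n) \<le> \<delta> ^ n * norm x)}"

definition rank_one :: "('a::complex_banach \<Rightarrow> 'a) \<Rightarrow> bool" where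
  "rank_one T \<longleftrightarrow> (\<exists>y. y \<noteq> 0 \<and> range T = {c *\<^sub>C y | c. True})"

end

theory Submission
  imports Defs
begin

lemma scaleC_zero_left[simp]: "(0::complex) *\<^sub>C (x::'a::complex_banach) = 0"
  by (metis scaleR_scaleC of_real_0 scaleR_zero_left)

lemma scaleC_real: "(complex_of_real r) *\<^sub>C (x::'a::complex_banach) = r *\<^sub>R x"
  by (simp add: scaleR_scaleC)

lemma scaleC_zero_right[simp]: "c *\<^sub>C (0::'a::complex_banach) = 0"
  by (metis add_cancel_right_right scaleC_add_right add_0_right)

lemma scaleC_minus_left: "(- c) *\<^sub>C (x::'a::complex_banach) = - (c *\<^sub>C x)"
  by (metis add_eq_0_iff2 neg_eq_iff_add_eq_0 scaleC_add_left scaleC_zero_left) 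

lemma scaleC_diff_left: "(c - d) *\<^sub>C (x::'a::complex_banach) = c *\<^sub>C x - d *\<^sub>C x"
  by (metis diff_conv_add_uminus scaleC_add_left scaleC_minus_left)

lemma scaleC_minus_right: "c *\<^sub>C (- x) = - (c *\<^sub>C (x::'a::complex_banach))"
  by (metis add_eq_0_iff2 neg_eq_iff_add_eq_0 scaleC_add_right scaleC_zero_right)

lemma scaleC_diff_right: "c *\<^sub>C (x - y) = c *\<^sub>C x - c *\<^sub>C (y::'a::complex_banach)"
  by (metis diff_conv_add_uminus scaleC_add_right scaleC_minus_right)

lemma scaleC_scaleR_comm: "c *\<^sub>C (r *\<^sub>R x) = r *\<^sub>R (c *\<^sub>C (x::'a::complex_banach))"
  by (simp add: scaleR_scaleC scaleC_scaleC mult.commute)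

lemma scaleC_decomp: "c *\<^sub>C (x::'a::complex_banach) = Re c *\<^sub>R x + Im c *\<^sub>R (\<i> *\<^sub>C x)"
proof -
  have "c = complex_of_real (Re c) + complex_of_real (Im c) * \<i>"
    by (simp add: complex_eq_iff)
  then have "c *\<^sub>C x = (complex_of_real (Re c) + complex_of_real (Im c) * \<i>) *\<^sub>C x" by simp
  also have "\<dots> = Re c *\<^sub>R x + Im c *\<^sub>R (\<i> *\<^sub>C x)"
    by (simp add: scaleC_add_left scaleR_scaleC scaleC_scaleC)
  finally show ?thesis .
qed

lemma scaleC_eq_0_iff: "c *\<^sub>C (x::'a::complex_banach) = 0 \<longleftrightarrow> c = 0 \<or> x = 0"
proof -
  have "c *\<^sub>C x = 0 \<longleftrightarrow> norm (c *\<^sub>C x) = 0" by simp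
  also have "\<dots> \<longleftrightarrow> c = 0 \<or> x = 0" by (simp add: norm_scaleC)
  finally show ?thesis .
qed

lemma linear_scaleC: "linear (\<lambda>x::'a::complex_banach. c *\<^sub>C x)"
  by (rule linearI) (simp_all add: scaleC_add_right scaleC_scaleR_comm)

lemma bounded_linear_scaleC: "bounded_linear (\<lambda>x::'a::complex_banach. c *\<^sub>C x)"
  by (rule bounded_linear_intro[where K="cmod c"]) (simp_all add: scaleC_add_right scaleC_scaleR_comm norm_scaleC mult.commute)

lemma bounded_linear_scaleC_left: "bounded_linear (\<lambda>c::complex. c *\<^sub>C (x::'a::complex_banach))"
  by (rule bounded_linear_intro[where K="norm x"]) (simp_all add: scaleC_add_left scaleR_scaleC scaleC_scaleC norm_scaleC scaleR_conv_of_real)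

definition D :: "'a::complex_banach set \<Rightarrow> 'a set" where "D S = S \<union> (\<lambda>x. \<i> *\<^sub>C x) ` S"
definition csp :: "'a::complex_banach set \<Rightarrow> 'a set" where "csp S = span (D S)"

lemma D_insert: "D (insert b S) = insert b (insert (\<i> *\<^sub>C b) (D S))"
  by (auto simp: D_def)
lemma D_empty[simp]: "D {} = {}" by (simp add: D_def)
lemma finite_D: "finite S \<Longrightarrow> finite (D S)" by (simp add: D_def)
lemma D_mono: "S \<subseteq> T \<Longrightarrow> D S \<subseteq> D T" by (auto simp: D_def)
lemma csp_mono: "S \<subseteq> T \<Longrightarrow> csp S \<subseteq> csp T" by (simp add: csp_def D_mono span_mono)
lemma csp_empty[simp]: "csp {} = {0}" by (simp add: csp_def)
lemma csp_superset: "S \<subseteq> csp S" unfolding csp_def D_def by (meson le_sup_iff span_superset)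

lemma csp_add: "x \<in> csp S \<Longrightarrow> y \<in> csp S \<Longrightarrow> x + y \<in> csp S"
  unfolding csp_def by (rule span_add)
lemma csp_diff: "x \<in> csp S \<Longrightarrow> y \<in> csp S \<Longrightarrow> x - y \<in> csp S"
  unfolding csp_def by (rule span_diff)
lemma csp_zero: "0 \<in> csp S"
  unfolding csp_def by (rule span_zero)

lemma csp_i: assumes "x \<in> csp S" shows "\<i> *\<^sub>C x \<in> csp S"
proof -
  have "(\<lambda>x. \<i> *\<^sub>C x) ` span (D S) = span ((\<lambda>x. \<i> *\<^sub>C x) ` D S)"
    by (rule span_linear_image[OF linear_scaleC, symmetric])
  moreover have "(\<lambda>x. \<i> *\<^sub>C x) ` D S \<subseteq> span (D S)"
  proof
    fix y assume "y \<in> (\<lambda>x. \<i> *\<^sub>C x) ` D S"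
    then obtain z where z: "z \<in> D S" "y = \<i> *\<^sub>C z" by auto
    show "y \<in> span (D S)"
    proof (cases "z \<in> S")
      case True then show ?thesis using z by (auto simp: D_def intro: span_base)
    next
      case False
      then obtain w where w: "w \<in> S" "z = \<i> *\<^sub>C w" using z by (auto simp: D_def)
      then have "y = - w" using z by (simp add: scaleC_scaleC scaleC_minus_left scaleC_one)
      then show ?thesis using w by (auto simp: D_def intro: span_base span_neg)
    qed
  qed
  ultimately have "(\<lambda>x. \<i> *\<^sub>C x) ` span (D S) \<subseteq> span (D S)"
    by (simp add: span_minimal)
  then show ?thesis using assms unfolding csp_def by blast
qed

lemma csp_scaleC: assumes "x \<in> csp S" shows "c *\<^sub>C x \<in> csp S"
proof -
  have "Re c *\<^sub>R x \<in> span (D S)" using assms unfolding csp_def by (rule span_scale)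
  moreover have "Im c *\<^sub>R (\<i> *\<^sub>C x) \<in> span (D S)" using csp_i[OF assms] unfolding csp_def by (rule span_scale)
  ultimately have "Re c *\<^sub>R x + Im c *\<^sub>R (\<i> *\<^sub>C x) \<in> csp S" unfolding csp_def by (rule span_add)
  then show ?thesis by (subst scaleC_decomp)
qed

lemma csp_base_scale: "s \<in> S \<Longrightarrow> c *\<^sub>C s \<in> csp S"
  using csp_scaleC csp_superset by blast

lemma csp_breakdown: "x \<in> csp (insert b S) \<longleftrightarrow> (\<exists>c. x - c *\<^sub>C b \<in> csp S)"
proof
  assume "x \<in> csp (insert b S)"
  then have "x \<in> span (insert b (insert (\<i> *\<^sub>C b) (D S)))" by (simp add: csp_def D_insert)
  then obtain r where "x - r *\<^sub>R b \<in> span (insert (\<i> *\<^sub>C b) (D S))" using span_breakdown_eq[THEN iffD1] by blast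
  then obtain s where "x - r *\<^sub>R b - s *\<^sub>R (\<i> *\<^sub>C b) \<in> span (D S)" using span_breakdown_eq[THEN iffD1] by blast
  moreover have "Complex r s *\<^sub>C b = r *\<^sub>R b + s *\<^sub>R (\<i> *\<^sub>C b)"
    using scaleC_decomp[of "Complex r s" b] by simp
  ultimately have "x - Complex r s *\<^sub>C b \<in> csp S" by (simp add: csp_def diff_diff_eq)
  then show "\<exists>c. x - c *\<^sub>C b \<in> csp S" ..
next
  assume "\<exists>c. x - c *\<^sub>C b \<in> csp S"
  then obtain c where c: "x - c *\<^sub>C b \<in> csp S" ..
  have sub: "csp S \<subseteq> csp (insert b S)" by (rule csp_mono) auto
  have 1: "x - c *\<^sub>C b \<in> csp (insert b S)" using c sub by blast
  have 2: "c *\<^sub>C b \<in> csp (insert b S)" using csp_base_scale[of b "insert b S" c] by simp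
  have "(x - c *\<^sub>C b) + c *\<^sub>C b \<in> csp (insert b S)" using 1 2 by (rule csp_add)
  then show "x \<in> csp (insert b S)" by simp
qed

lemma csp_cancel: assumes "k \<notin> csp S" "c *\<^sub>C k \<in> csp S" shows "c = 0"
proof (rule ccontr)
  assume "c \<noteq> 0"
  then have eq: "inverse c *\<^sub>C (c *\<^sub>C k) = k" by (simp add: scaleC_scaleC scaleC_one)
  have "inverse c *\<^sub>C (c *\<^sub>C k) \<in> csp S" using csp_scaleC[OF assms(2)] .
  then show False using assms(1) eq by simp
qed

lemma i_not_in_span: assumes "k \<notin> csp S" shows "\<i> *\<^sub>C k \<notin> span (insert k (D S))"
proof
  assume "\<i> *\<^sub>C k \<in> span (insert k (D S))"
  then obtain r where "\<i> *\<^sub>C k - r *\<^sub>R k \<in> csp S" using span_breakdown_eq[THEN iffD1] unfolding csp_def by blast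
  then have "(\<i> - complex_of_real r) *\<^sub>C k \<in> csp S" by (simp add: scaleC_diff_left scaleR_scaleC)
  then have "\<i> - complex_of_real r = 0" using csp_cancel assms by blast
  then show False by (simp add: complex_eq_iff)
qed


lemma core_sub_range: assumes "x \<in> analytic_core B" shows "x \<in> range B"
proof -
  from assms obtain xs where "xs 0 = x" "\<forall>n. B (xs (Suc n)) = xs n"
    unfolding analytic_core_def by blast
  then have "x = B (xs 1)" by simp
  then show ?thesis by simp
qed

lemma core_eig: assumes "B v = v" shows "v \<in> analytic_core B"
  unfolding analytic_core_def
  by (rule CollectI, rule exI[of _ 1], simp, rule exI[of _ "\<lambda>n. v"], simp add: assms)

lemma core_sub:
  assumes C: "bounded_linear C" and inv: "\<And>v. v \<in> V \<Longrightarrow> C v \<in> V"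
    and rinv: "\<And>v. v \<in> V \<Longrightarrow> B (C v) = v"
  shows "V \<subseteq> analytic_core B"
proof
  fix x assume x: "x \<in> V"
  obtain K where K: "K > 0" "\<And>y. norm (C y) \<le> norm y * K"
    using bounded_linear.pos_bounded[OF C] by blast
  define xs where "xs n = (C ^^ n) x" for n
  have inV: "xs n \<in> V" for n by (induction n) (auto simp: xs_def x inv)
  have step: "B (xs (Suc n)) = xs n" for n using rinv[OF inV[of n]] by (simp add: xs_def)
  have nb: "norm (xs n) \<le> K ^ n * norm x" for n
  proof (induction n)
    case 0 then show ?case by (simp add: xs_def)
  next
    case (Suc n)
    have "norm (xs (Suc n)) \<le> norm (xs n) * K" using K(2)[of "xs n"] by (simp add: xs_def)
    also have "\<dots> \<le> K ^ n * norm x * K" using Suc K(1) by (simp add: mult_right_mono)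
    finally show ?case by (simp add: mult.commute mult.left_commute)
  qed
  show "x \<in> analytic_core B" unfolding analytic_core_def
    using K(1) step nb by (auto intro!: exI[of _ K] exI[of _ xs] simp: xs_def)
qed

lemma infdim_real:
  assumes "\<not> complex_finite_dim TYPE('a::complex_banach)" "finite (T::'a set)"
  shows "\<exists>x::'a. x \<notin> span T"
proof (rule ccontr)
  assume "\<not> (\<exists>x::'a. x \<notin> span T)"
  then have all: "\<And>x. x \<in> span T" by blast
  have "\<exists>c. x = (\<Sum>b\<in>T. c b *\<^sub>C b)" for x :: 'a
  proof -
    have "x \<in> range (\<lambda>u. \<Sum>v\<in>T. u v *\<^sub>R v)" using all[of x] unfolding span_finite[OF assms(2)] .
    then obtain u where u: "x = (\<Sum>v\<in>T. u v *\<^sub>R v)" by blast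
    have "(\<Sum>v\<in>T. u v *\<^sub>R v) = (\<Sum>b\<in>T. complex_of_real (u b) *\<^sub>C b)"
      by (rule sum.cong) (simp_all add: scaleC_real)
    then have "x = (\<Sum>b\<in>T. complex_of_real (u b) *\<^sub>C b)" using u by simp
    then show ?thesis by (rule exI[of _ "\<lambda>b. complex_of_real (u b)"])
  qed
  then have "complex_finite_dim TYPE('a)" unfolding complex_finite_dim_def using assms(2) by (intro exI[of _ T]) simp
  then show False using assms(1) by simp
qed

lemma ker_fresh:
  fixes N :: "'a::real_vector \<Rightarrow> 'a"
  assumes N: "linear N" and F: "finite F" and rg: "\<And>x. N x \<in> span F"
    and inf: "\<And>T::'a set. finite T \<Longrightarrow> \<exists>x. x \<notin> span T" and T: "finite T"
  shows "\<exists>k. N k = 0 \<and> k \<notin> span T"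
proof (rule ccontr)
  assume "\<not> (\<exists>k. N k = 0 \<and> k \<notin> span T)"
  then have ker: "\<And>k. N k = 0 \<Longrightarrow> k \<in> span T" by blast
  obtain B where B: "B \<subseteq> range N" "independent B" "range N \<subseteq> span B" "card B = dim (range N)"
    by (rule basis_exists)
  have "B \<subseteq> span F" using B(1) rg by blast
  then have finB: "finite B" using independent_span_bound[OF F B(2)] by blast
  define P where "P = (\<lambda>b. SOME p. N p = b) ` B"
  have Nsome: "N (SOME p. N p = b) = b" if "b \<in> B" for b
  proof -
    have "\<exists>p. N p = b" using that B(1) by blast
    then show ?thesis by (rule someI_ex)
  qed
  have NP: "N ` P = B"
    unfolding P_def image_image using Nsome by simp
  have finP: "finite P" unfolding P_def using finB by simp
  have "x \<in> span (T \<union> P)" for x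
  proof -
    have "N x \<in> span B" using B(3) by blast
    also have "span B = N ` span P" using span_linear_image[OF N, of P] NP by simp
    finally obtain p where p: "p \<in> span P" "N x = N p" by blast
    have "N (x - p) = 0" using p(2) linear_diff[OF N] by simp
    then have "x - p \<in> span T" by (rule ker)
    moreover have "span T \<subseteq> span (T \<union> P)" by (rule span_mono) simp
    ultimately have 1: "x - p \<in> span (T \<union> P)" by blast
    have "span P \<subseteq> span (T \<union> P)" by (rule span_mono) simp
    then have 2: "p \<in> span (T \<union> P)" using p(1) by blast
    have "(x - p) + p \<in> span (T \<union> P)" using 1 2 by (rule span_add)
    then show ?thesis by simp
  qed
  moreover obtain y where "y \<notin> span (T \<union> P)" using inf[of "T \<union> P"] T finP by blast
  ultimately show False by blast
qed

lemma coef_bound: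
  fixes a :: "'a::real_normed_vector"
  assumes m: "m \<in> span S"
  shows "\<bar>t\<bar> * infdist a (span S) \<le> norm (m + t *\<^sub>R a)"
proof (cases "t = 0")
  case True then show ?thesis by simp
next
  case False
  have "- ((1/t) *\<^sub>R m) \<in> span S" using m by (simp add: span_neg span_scale)
  then have "infdist a (span S) \<le> dist a (- ((1/t) *\<^sub>R m))" by (rule infdist_le)
  also have "\<dots> = norm (a + (1/t) *\<^sub>R m)" by (simp add: dist_norm)
  finally have "\<bar>t\<bar> * infdist a (span S) \<le> \<bar>t\<bar> * norm (a + (1/t) *\<^sub>R m)"
    by (simp add: mult_left_mono)
  also have "\<dots> = norm (t *\<^sub>R (a + (1/t) *\<^sub>R m))" by simp
  also have "t *\<^sub>R (a + (1/t) *\<^sub>R m) = m + t *\<^sub>R a" using False by (simp add: scaleR_add_right)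
  finally show ?thesis .
qed

lemma closed_span_finite:
  fixes S :: "'a::real_normed_vector set"
  assumes "finite S" shows "closed (span S)"
  using assms
proof (induction S rule: finite_induct)
  case empty then show ?case by simp
next
  case (insert a S)
  show ?case
  proof (cases "a \<in> span S")
    case True
    then have "span (insert a S) = span S" by (simp add: span_redundant)
    then show ?thesis using insert by simp
  next
    case False
    let ?d = "infdist a (span S)"
    have dpos: "?d > 0"
      using infdist_pos_not_in_closed[OF insert.IH _ False] span_zero by blast
    show ?thesis unfolding closed_sequential_limits
    proof (intro allI impI, elim conjE)
      fix f l assume fin: "\<forall>n. f n \<in> span (insert a S)" and lim: "f \<longlonglongrightarrow> l"
      have "\<forall>n. \<exists>t. f n - t *\<^sub>R a \<in> span S" using fin span_breakdown_eq by blast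
      then obtain t where t: "\<And>n. f n - t n *\<^sub>R a \<in> span S" by metis
      have tb: "\<bar>t n - t m\<bar> * ?d \<le> norm (f n - f m)" for n m
      proof -
        have "(f m - t m *\<^sub>R a) - (f n - t n *\<^sub>R a) \<in> span S" by (rule span_diff[OF t t])
        then have "\<bar>t m - t n\<bar> * ?d \<le> norm (((f m - t m *\<^sub>R a) - (f n - t n *\<^sub>R a)) + (t m - t n) *\<^sub>R a)"
          by (rule coef_bound)
        also have "((f m - t m *\<^sub>R a) - (f n - t n *\<^sub>R a)) + (t m - t n) *\<^sub>R a = f m - f n"
          by (simp add: algebra_simps)
        finally show ?thesis by (simp add: norm_minus_commute abs_minus_commute)
      qed
      have "Cauchy f" using lim by (rule LIMSEQ_imp_Cauchy)
      have "Cauchy t"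
      proof (rule metric_CauchyI)
        fix e :: real assume e: "e > 0"
        then obtain M where M: "\<And>m n. m \<ge> M \<Longrightarrow> n \<ge> M \<Longrightarrow> dist (f m) (f n) < e * ?d"
          using metric_CauchyD[OF \<open>Cauchy f\<close>, of "e * ?d"] dpos by auto
        show "\<exists>M. \<forall>m\<ge>M. \<forall>n\<ge>M. dist (t m) (t n) < e"
        proof (intro exI allI impI)
          fix m n assume "m \<ge> M" "n \<ge> M"
          then have "\<bar>t m - t n\<bar> * ?d < e * ?d" using tb[of m n] M[of m n] by (simp add: dist_norm)
          then show "dist (t m) (t n) < e" using dpos by (simp add: dist_real_def)
        qed
      qed
      then obtain \<tau> where tau: "t \<longlonglongrightarrow> \<tau>" using Cauchy_convergent_iff convergent_def by blast
      have "(\<lambda>n. f n - t n *\<^sub>R a) \<longlonglongrightarrow> l - \<tau> *\<^sub>R a"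
        by (intro tendsto_intros lim tau)
      then have "l - \<tau> *\<^sub>R a \<in> span S"
        by (rule closed_sequentially[OF insert.IH, rotated]) (rule t)
      then show "l \<in> span (insert a S)" using span_breakdown_eq by blast
    qed
  qed
qed


definition hbA :: "real \<Rightarrow> ('a::real_normed_vector \<times> real) set \<Rightarrow> ('a \<times> real) set set" where
"hbA C G0 = {G. G0 \<subseteq> G \<and> (\<forall>a r s. (a,r)\<in>G \<longrightarrow> (a,s)\<in>G \<longrightarrow> r = s)
   \<and> (\<forall>a b r s. (a,r)\<in>G \<longrightarrow> (b,s)\<in>G \<longrightarrow> (a+b, r+s)\<in>G)
   \<and> (\<forall>a r c. (a,r)\<in>G \<longrightarrow> (c *\<^sub>R a, c*r)\<in>G)
   \<and> (\<forall>a r. (a,r)\<in>G \<longrightarrow> r \<le> C * norm a)}"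

lemma hbA_chain:
  assumes G0: "G0 \<in> hbA C G0" and ch: "Ch \<in> chains (hbA C G0)"
  shows "\<exists>U\<in>hbA C G0. \<forall>X\<in>Ch. X \<subseteq> U"
proof (cases "Ch = {}")
  case True then show ?thesis using G0 by blast
next
  case False
  have sub: "Ch \<subseteq> hbA C G0" and cmp: "\<And>X Y. X \<in> Ch \<Longrightarrow> Y \<in> Ch \<Longrightarrow> X \<subseteq> Y \<or> Y \<subseteq> X"
    using ch unfolding chains_def chain_subset_def by blast+
  have two: "\<exists>X\<in>Ch. p \<in> X \<and> q \<in> X" if "p \<in> \<Union>Ch" "q \<in> \<Union>Ch" for p q
  proof -
    from that obtain X Y where "X \<in> Ch" "Y \<in> Ch" "p \<in> X" "q \<in> Y" by blast
    then show ?thesis using cmp[of X Y] by blast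
  qed
  have "\<Union>Ch \<in> hbA C G0"
    unfolding hbA_def
  proof (intro CollectI conjI allI impI)
    obtain X where X: "X \<in> Ch" using False by blast
    then have "G0 \<subseteq> X" using sub unfolding hbA_def by blast
    then show "G0 \<subseteq> \<Union>Ch" using X by blast
  next
    fix a r s assume "(a, r) \<in> \<Union>Ch" "(a, s) \<in> \<Union>Ch"
    then obtain X where "X \<in> Ch" "(a,r) \<in> X" "(a,s) \<in> X" using two by blast
    then show "r = s" using sub unfolding hbA_def by blast
  next
    fix a b r s assume "(a, r) \<in> \<Union>Ch" "(b, s) \<in> \<Union>Ch"
    then obtain X where X: "X \<in> Ch" "(a,r) \<in> X" "(b,s) \<in> X" using two by blast
    then have "(a+b, r+s) \<in> X" using sub unfolding hbA_def by blast
    then show "(a+b, r+s) \<in> \<Union>Ch" using X by blast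
  next
    fix a r c assume "(a, r) \<in> \<Union>Ch"
    then obtain X where X: "X \<in> Ch" "(a,r) \<in> X" by blast
    then have "(c *\<^sub>R a, c*r) \<in> X" using sub unfolding hbA_def by blast
    then show "(c *\<^sub>R a, c*r) \<in> \<Union>Ch" using X by blast
  next
    fix a r assume "(a, r) \<in> \<Union>Ch"
    then obtain X where X: "X \<in> Ch" "(a,r) \<in> X" by blast
    then show "r \<le> C * norm a" using sub unfolding hbA_def by blast
  qed
  then show ?thesis by blast
qed

lemma hbA_extend:
  assumes M: "M \<in> hbA C G0" and ne: "(w0, r0) \<in> M" and Cnn: "C \<ge> 0"
    and a: "\<And>r. (a, r) \<notin> M"
  shows "\<exists>M'\<in>hbA C G0. M \<subseteq> M' \<and> M' \<noteq> M"
proof -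
  have fnc: "\<And>a r s. (a,r)\<in>M \<Longrightarrow> (a,s)\<in>M \<Longrightarrow> r = s"
   and add: "\<And>a b r s. (a,r)\<in>M \<Longrightarrow> (b,s)\<in>M \<Longrightarrow> (a+b, r+s)\<in>M"
   and scl: "\<And>a r c. (a,r)\<in>M \<Longrightarrow> (c *\<^sub>R a, c*r)\<in>M"
   and bnd: "\<And>a r. (a,r)\<in>M \<Longrightarrow> r \<le> C * norm a"
   and G0: "G0 \<subseteq> M"
    using M unfolding hbA_def by blast+
  define L where "L = {r - C * norm (w - a) | w r. (w, r) \<in> M}"
  define c where "c = Sup L"
  have key: "r - C * norm (w - a) \<le> C * norm (w' + a) - r'" if "(w,r)\<in>M" "(w',r')\<in>M" for w r w' r'
  proof -
    have "r + r' \<le> C * norm (w + w')" using bnd[OF add[OF that]] .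
    also have "norm (w + w') \<le> norm (w - a) + norm (w' + a)"
      using norm_triangle_ineq[of "w - a" "w' + a"] by simp
    then have "C * norm (w + w') \<le> C * (norm (w - a) + norm (w' + a))" using mult_left_mono[OF _ Cnn] by blast
    finally show ?thesis by (simp add: algebra_simps)
  qed
  have Lne: "L \<noteq> {}" unfolding L_def using ne by blast
  have Lb: "\<forall>x\<in>L. x \<le> C * norm (w0 + a) - r0"
  proof
    fix x assume "x \<in> L"
    then obtain w r where "x = r - C * norm (w - a)" "(w, r) \<in> M" unfolding L_def by blast
    then show "x \<le> C * norm (w0 + a) - r0" using key[OF _ ne, of w r] by simp
  qed
  have Lbdd: "bdd_above L" unfolding bdd_above_def using Lb by (intro exI[of _ "C * norm (w0 + a) - r0"])
  have upper: "r - C * norm (w - a) \<le> c" if "(w,r)\<in>M" for w r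
  proof -
    have "r - C * norm (w - a) \<in> L" unfolding L_def using that by blast
    then show ?thesis unfolding c_def by (rule cSup_upper[OF _ Lbdd])
  qed
  have lower: "c \<le> C * norm (w' + a) - r'" if "(w',r')\<in>M" for w' r'
    unfolding c_def
  proof (rule cSup_least[OF Lne])
    fix x assume "x \<in> L"
    then obtain w r where "x = r - C * norm (w - a)" "(w, r) \<in> M" unfolding L_def by blast
    then show "x \<le> C * norm (w' + a) - r'" using key[OF _ that, of w r] by simp
  qed
  define M' where "M' = {(v + t *\<^sub>R a, r + t * c) | v r t. (v, r) \<in> M}"
  have memM': "(x, r) \<in> M' \<longleftrightarrow> (\<exists>v s t. (v, s) \<in> M \<and> x = v + t *\<^sub>R a \<and> r = s + t * c)" for x r
    unfolding M'_def by blast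
  have zero: "(0, 0) \<in> M" using scl[OF ne, of 0] by simp
  have MM': "M \<subseteq> M'"
  proof
    fix p assume "p \<in> M"
    then obtain v r where "p = (v, r)" "(v,r) \<in> M" by (cases p) auto
    then show "p \<in> M'" using memM'[of v r] by (metis add.right_neutral mult_zero_left scaleR_zero_left)
  qed
  have aM': "(a, c) \<in> M'" using memM'[of a c] zero by (metis add_0 mult_1 scaleR_one)
  have "M' \<in> hbA C G0"
    unfolding hbA_def
  proof (intro CollectI conjI allI impI)
    show "G0 \<subseteq> M'" using G0 MM' by blast
  next
    fix x r s assume h: "(x, r) \<in> M'" "(x, s) \<in> M'"
    obtain v1 r1 t1 where e1: "(v1,r1) \<in> M" "x = v1 + t1 *\<^sub>R a" "r = r1 + t1 * c"
      using h(1) memM' by blast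
    obtain v2 r2 t2 where e2: "(v2,r2) \<in> M" "x = v2 + t2 *\<^sub>R a" "s = r2 + t2 * c"
      using h(2) memM' by blast
    have e: "x = v1 + t1 *\<^sub>R a" "r = r1 + t1 * c" "(v1,r1) \<in> M"
      "x = v2 + t2 *\<^sub>R a" "s = r2 + t2 * c" "(v2,r2) \<in> M" using e1 e2 by auto
    have t: "t1 = t2"
    proof (rule ccontr)
      assume ne: "t1 \<noteq> t2"
      have "(v2 + (- 1) *\<^sub>R v1, r2 + (-1) * r1) \<in> M" using add[OF e(6) scl[OF e(3)]] .
      then have "((1 / (t1 - t2)) *\<^sub>R (v2 + (- 1) *\<^sub>R v1), (1 / (t1 - t2)) * (r2 + (-1) * r1)) \<in> M" by (rule scl)
      moreover have "(1 / (t1 - t2)) *\<^sub>R (v2 + (- 1) *\<^sub>R v1) = a"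
      proof -
        have "v2 - v1 = (t1 - t2) *\<^sub>R a" using e(1) e(4) by (simp add: algebra_simps)
        then show ?thesis using ne by simp
      qed
      ultimately show False using a by simp
    qed
    then have "v1 = v2" using e by simp
    then have "r1 = r2" using fnc e by blast
    then show "r = s" using e t by simp
  next
    fix x y r s assume h: "(x, r) \<in> M'" "(y, s) \<in> M'"
    obtain v1 r1 t1 where e1: "(v1,r1) \<in> M" "x = v1 + t1 *\<^sub>R a" "r = r1 + t1 * c"
      using h(1) memM' by blast
    obtain v2 r2 t2 where e2: "(v2,r2) \<in> M" "y = v2 + t2 *\<^sub>R a" "s = r2 + t2 * c"
      using h(2) memM' by blast
    have e: "x = v1 + t1 *\<^sub>R a" "r = r1 + t1 * c" "(v1,r1) \<in> M"
      "y = v2 + t2 *\<^sub>R a" "s = r2 + t2 * c" "(v2,r2) \<in> M" using e1 e2 by auto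
    have "(v1 + v2, r1 + r2) \<in> M" using add e by blast
    moreover have "x + y = (v1 + v2) + (t1 + t2) *\<^sub>R a" "r + s = (r1 + r2) + (t1 + t2) * c"
      using e by (simp_all add: algebra_simps)
    ultimately show "(x + y, r + s) \<in> M'" using memM' by blast
  next
    fix x r k assume h: "(x, r) \<in> M'"
    obtain v1 r1 t1 where e: "(v1,r1) \<in> M" "x = v1 + t1 *\<^sub>R a" "r = r1 + t1 * c"
      using h memM' by blast
    have "(k *\<^sub>R v1, k * r1) \<in> M" using scl e by blast
    moreover have "k *\<^sub>R x = k *\<^sub>R v1 + (k * t1) *\<^sub>R a" "k * r = k * r1 + (k * t1) * c"
      using e by (simp_all add: algebra_simps)
    ultimately show "(k *\<^sub>R x, k * r) \<in> M'" using memM' by blast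
  next
    fix x r assume h: "(x, r) \<in> M'"
    obtain v s t where e0: "(v,s) \<in> M" "x = v + t *\<^sub>R a" "r = s + t * c"
      using h memM' by blast
    have e: "x = v + t *\<^sub>R a" "r = s + t * c" "(v,s) \<in> M" using e0 by auto
    consider "t = 0" | "t > 0" | "t < 0" by linarith
    then show "r \<le> C * norm x"
    proof cases
      case 1 then show ?thesis using e bnd by simp
    next
      case 2
      have "((1/t) *\<^sub>R v, (1/t) * s) \<in> M" using scl e by blast
      then have "c \<le> C * norm ((1/t) *\<^sub>R v + a) - (1/t) * s" by (rule lower)
      then have "t * c \<le> t * (C * norm ((1/t) *\<^sub>R v + a) - (1/t) * s)" using 2 by (simp add: mult_left_mono)
      also have "\<dots> = C * (t * norm ((1/t) *\<^sub>R v + a)) - s" using 2 by (simp add: algebra_simps)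
      also have "t * norm ((1/t) *\<^sub>R v + a) = norm (t *\<^sub>R ((1/t) *\<^sub>R v + a))" using 2 by simp
      also have "t *\<^sub>R ((1/t) *\<^sub>R v + a) = x" using 2 e by (simp add: scaleR_add_right)
      finally show ?thesis using e by simp
    next
      case 3
      define u where "u = - t"
      have u: "u > 0" using 3 by (simp add: u_def)
      have "((1/u) *\<^sub>R v, (1/u) * s) \<in> M" using scl e by blast
      then have "(1/u) * s - C * norm ((1/u) *\<^sub>R v - a) \<le> c" by (rule upper)
      then have "u * ((1/u) * s - C * norm ((1/u) *\<^sub>R v - a)) \<le> u * c" using u by (simp add: mult_left_mono)
      then have "s - C * (u * norm ((1/u) *\<^sub>R v - a)) \<le> u * c" using u by (simp add: algebra_simps)
      also have "u * norm ((1/u) *\<^sub>R v - a) = norm (u *\<^sub>R ((1/u) *\<^sub>R v - a))" using u by simp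
      also have "u *\<^sub>R ((1/u) *\<^sub>R v - a) = x" using u e by (simp add: scaleR_diff_right u_def)
      finally show ?thesis using e by (simp add: u_def)
    qed
  qed
  moreover have "M' \<noteq> M" using aM' a by blast
  ultimately show ?thesis using MM' by blast
qed

lemma hahn_banach_graph:
  fixes G0 :: "('a::real_normed_vector \<times> real) set"
  assumes G0: "G0 \<in> hbA C G0" and ne: "G0 \<noteq> {}" and Cnn: "C \<ge> 0"
  shows "\<exists>u. bounded_linear u \<and> (\<forall>a r. (a, r) \<in> G0 \<longrightarrow> u a = r)"
proof -
  have "\<forall>Ch\<in>chains (hbA C G0). \<exists>U\<in>hbA C G0. \<forall>X\<in>Ch. X \<subseteq> U"
    using hbA_chain[OF G0] by blast
  from Zorn_Lemma2[OF this] obtain M where M: "M \<in> hbA C G0" and max0: "\<forall>X\<in>hbA C G0. M \<subseteq> X \<longrightarrow> X = M"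
    by blast
  have max: "\<And>X. X \<in> hbA C G0 \<Longrightarrow> M \<subseteq> X \<Longrightarrow> X = M" using max0 by blast
  have fnc: "\<And>a r s. (a,r)\<in>M \<Longrightarrow> (a,s)\<in>M \<Longrightarrow> r = s"
   and add: "\<And>a b r s. (a,r)\<in>M \<Longrightarrow> (b,s)\<in>M \<Longrightarrow> (a+b, r+s)\<in>M"
   and scl: "\<And>a r c. (a,r)\<in>M \<Longrightarrow> (c *\<^sub>R a, c*r)\<in>M"
   and bnd: "\<And>a r. (a,r)\<in>M \<Longrightarrow> r \<le> C * norm a"
   and G0M: "G0 \<subseteq> M"
    using M unfolding hbA_def by blast+
  obtain w0 r0 where "(w0, r0) \<in> G0" using ne by auto
  then have w0: "(w0, r0) \<in> M" using G0M by blast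
  have tot: "\<exists>r. (x, r) \<in> M" for x
  proof (rule ccontr)
    assume "\<not> (\<exists>r. (x, r) \<in> M)"
    then have "\<And>r. (x, r) \<notin> M" by blast
    from hbA_extend[OF M w0 Cnn this] obtain M' where "M' \<in> hbA C G0" "M \<subseteq> M'" "M' \<noteq> M" by blast
    then show False using max by blast
  qed
  define u where "u x = (THE r. (x, r) \<in> M)" for x
  have uM: "(x, u x) \<in> M" for x
  proof -
    obtain r where r: "(x, r) \<in> M" using tot by blast
    have "(THE r. (x, r) \<in> M) = r"
    proof (rule the_equality[where P="\<lambda>r. (x, r) \<in> M", OF r])
      fix s assume "(x, s) \<in> M" then show "s = r" using fnc[OF _ r] by blast
    qed
    then show ?thesis using r by (simp add: u_def)
  qed
  have ueq: "u x = r" if "(x, r) \<in> M" for x r using fnc[OF uM that] .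
  have "bounded_linear u"
  proof (rule bounded_linear_intro[where K = C])
    show "u (x + y) = u x + u y" for x y using ueq[OF add[OF uM uM]] .
    show "u (r *\<^sub>R x) = r *\<^sub>R u x" for r x using ueq[OF scl[OF uM]] by simp
    show "norm (u x) \<le> norm x * C" for x
    proof -
      have 1: "u x \<le> C * norm x" using bnd[OF uM] .
      have "u ((-1) *\<^sub>R x) = (-1) * u x" by (rule ueq[OF scl[OF uM]])
      then have "u ((-1) *\<^sub>R x) = - u x" by simp
      moreover have "u ((-1) *\<^sub>R x) \<le> C * norm ((-1) *\<^sub>R x)" using bnd[OF uM] .
      ultimately have 2: "- u x \<le> C * norm x" by simp
      show ?thesis using 1 2 by (simp add: abs_le_iff mult.commute)
    qed
  qed
  moreover have "\<forall>a r. (a, r) \<in> G0 \<longrightarrow> u a = r"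
  proof (intro allI impI)
    fix a r assume "(a, r) \<in> G0" then have "(a, r) \<in> M" using G0M by blast
    then show "u a = r" by (rule ueq)
  qed
  ultimately show ?thesis by blast
qed


lemma sep_real:
  fixes x :: "'a::real_normed_vector"
  assumes S: "finite S" and x: "x \<notin> span S"
  shows "\<exists>u::'a\<Rightarrow>real. bounded_linear u \<and> (\<forall>m\<in>span S. u m = 0) \<and> u x = 1"
proof -
  let ?d = "infdist x (span S)"
  have dpos: "?d > 0"
    using infdist_pos_not_in_closed[OF closed_span_finite[OF S] _ x] span_zero by blast
  define G0 where "G0 = {(m + t *\<^sub>R x, t) | m t. m \<in> span S}"
  have mem: "(y, r) \<in> G0 \<longleftrightarrow> (\<exists>m. m \<in> span S \<and> y = m + r *\<^sub>R x)" for y r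
    unfolding G0_def by blast
  have "G0 \<in> hbA (1 / ?d) G0"
    unfolding hbA_def
  proof (intro CollectI conjI allI impI subset_refl)
    fix y r s assume h: "(y, r) \<in> G0" "(y, s) \<in> G0"
    obtain m where m: "m \<in> span S" "y = m + r *\<^sub>R x" using h(1) mem by blast
    obtain m' where m': "m' \<in> span S" "y = m' + s *\<^sub>R x" using h(2) mem by blast
    show "r = s"
    proof (rule ccontr)
      assume ne: "r \<noteq> s"
      have "(r - s) *\<^sub>R x = m' - m" using m m' by (simp add: algebra_simps)
      moreover have "x = (1 / (r - s)) *\<^sub>R ((r - s) *\<^sub>R x)" using ne by simp
      ultimately have "x = (1 / (r - s)) *\<^sub>R (m' - m)" by simp
      moreover have "(1 / (r - s)) *\<^sub>R (m' - m) \<in> span S" using m m' by (simp add: span_diff span_scale)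
      ultimately show False using x by simp
    qed
  next
    fix y z r s assume h: "(y, r) \<in> G0" "(z, s) \<in> G0"
    obtain m where m: "m \<in> span S" "y = m + r *\<^sub>R x" using h(1) mem by blast
    obtain m' where m': "m' \<in> span S" "z = m' + s *\<^sub>R x" using h(2) mem by blast
    have "m + m' \<in> span S" using m m' by (simp add: span_add)
    moreover have "y + z = (m + m') + (r + s) *\<^sub>R x" using m m' by (simp add: algebra_simps)
    ultimately show "(y + z, r + s) \<in> G0" using mem by blast
  next
    fix y r c assume h: "(y, r) \<in> G0"
    obtain m where m: "m \<in> span S" "y = m + r *\<^sub>R x" using h mem by blast
    have "c *\<^sub>R m \<in> span S" using m by (simp add: span_scale)
    moreover have "c *\<^sub>R y = c *\<^sub>R m + (c * r) *\<^sub>R x" using m by (simp add: algebra_simps)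
    ultimately show "(c *\<^sub>R y, c * r) \<in> G0" using mem by blast
  next
    fix y r assume h: "(y, r) \<in> G0"
    obtain m where m: "m \<in> span S" "y = m + r *\<^sub>R x" using h mem by blast
    have "\<bar>r\<bar> * ?d \<le> norm y" using coef_bound[OF m(1), of r x] m(2) by simp
    then have "\<bar>r\<bar> \<le> norm y / ?d" using dpos by (simp add: le_divide_eq)
    then show "r \<le> 1 / ?d * norm y" by simp
  qed
  moreover have "G0 \<noteq> {}" using mem[of "0 + 0 *\<^sub>R x" 0] span_zero by blast
  ultimately obtain u where u: "bounded_linear u" "\<forall>a r. (a, r) \<in> G0 \<longrightarrow> u a = r"
    using hahn_banach_graph[of G0 "1 / ?d"] dpos by auto
  have "\<forall>m\<in>span S. u m = 0"
  proof
    fix m assume "m \<in> span S"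
    then have "(m, 0) \<in> G0" using mem by simp
    then show "u m = 0" using u(2) by blast
  qed
  moreover have "(x, 1) \<in> G0" using mem[of x 1] span_zero by force
  then have "u x = 1" using u(2) by blast
  ultimately show ?thesis using u(1) by blast
qed

definition chom :: "('a::complex_banach \<Rightarrow> complex) \<Rightarrow> bool" where
  "chom g \<longleftrightarrow> bounded_linear g \<and> (\<forall>c v. g (c *\<^sub>C v) = c * g v)"

lemma sep_complex:
  fixes x :: "'a::complex_banach"
  assumes T: "finite T" and x: "x \<notin> csp T"
  shows "\<exists>g. chom g \<and> (\<forall>m\<in>csp T. g m = 0) \<and> g x = 1"
proof -
  let ?S = "insert (\<i> *\<^sub>C x) (D T)"
  have xS: "x \<notin> span ?S"
  proof
    assume "x \<in> span ?S"
    then obtain r where r: "x - r *\<^sub>R (\<i> *\<^sub>C x) \<in> csp T"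
      using span_breakdown_eq[THEN iffD1] unfolding csp_def by blast
    have "x - r *\<^sub>R (\<i> *\<^sub>C x) = (1 - complex_of_real r * \<i>) *\<^sub>C x"
      by (simp add: scaleC_diff_left scaleC_one scaleR_scaleC scaleC_scaleC)
    then have "(1 - complex_of_real r * \<i>) *\<^sub>C x \<in> csp T" using r by simp
    then have "1 - complex_of_real r * \<i> = 0" using csp_cancel x by blast
    then show False by (simp add: complex_eq_iff)
  qed
  obtain u :: "'a \<Rightarrow> real" where u: "bounded_linear u" "\<forall>m\<in>span ?S. u m = 0" "u x = 1"
    using sep_real[OF _ xS] T by (auto simp: finite_D)
  have ul: "linear u" using u(1) bounded_linear.linear by blast
  define g where "g v = complex_of_real (u v) - \<i> * complex_of_real (u (\<i> *\<^sub>C v))" for v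
  have bl: "bounded_linear g"
  proof -
    have 1: "bounded_linear (\<lambda>v. complex_of_real (u v))"
      by (rule bounded_linear_compose[OF bounded_linear_of_real u(1)])
    have "bounded_linear (\<lambda>v. u (\<i> *\<^sub>C v))"
      by (rule bounded_linear_compose[OF u(1) bounded_linear_scaleC])
    then have "bounded_linear (\<lambda>v. complex_of_real (u (\<i> *\<^sub>C v)))"
      by (rule bounded_linear_compose[OF bounded_linear_of_real])
    then have 2: "bounded_linear (\<lambda>v. \<i> * complex_of_real (u (\<i> *\<^sub>C v)))"
      by (rule bounded_linear_compose[OF bounded_linear_mult_right])
    show ?thesis unfolding g_def using bounded_linear_sub[OF 1 2] .
  qed
  have gadd: "g (a + b) = g a + g b" for a b using linear_add[OF bounded_linear.linear[OF bl]] by simp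
  have gscR: "g (r *\<^sub>R a) = complex_of_real r * g a" for r a
    using linear_scale[OF bounded_linear.linear[OF bl]] by (simp add: scaleR_conv_of_real)
  have gi: "g (\<i> *\<^sub>C v) = \<i> * g v" for v
  proof -
    have "\<i> *\<^sub>C (\<i> *\<^sub>C v) = - v" by (simp add: scaleC_scaleC scaleC_minus_left scaleC_one)
    then have "u (\<i> *\<^sub>C (\<i> *\<^sub>C v)) = - u v" using linear_neg[OF ul] by simp
    then show ?thesis unfolding g_def by (simp add: algebra_simps)
  qed
  have gC: "g (c *\<^sub>C v) = c * g v" for c v
  proof -
    have "g (c *\<^sub>C v) = g (Re c *\<^sub>R v + Im c *\<^sub>R (\<i> *\<^sub>C v))" by (subst scaleC_decomp) (rule refl)
    also have "\<dots> = complex_of_real (Re c) * g v + complex_of_real (Im c) * (\<i> * g v)"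
      by (simp add: gadd gscR gi)
    also have "\<dots> = (complex_of_real (Re c) + complex_of_real (Im c) * \<i>) * g v" by (simp add: algebra_simps)
    also have "complex_of_real (Re c) + complex_of_real (Im c) * \<i> = c" by (simp add: complex_eq_iff)
    finally show ?thesis .
  qed
  have sub: "csp T \<subseteq> span ?S" unfolding csp_def by (rule span_mono) blast
  have "\<forall>m\<in>csp T. g m = 0"
  proof
    fix m assume m: "m \<in> csp T"
    have "u m = 0" using u(2) sub m by blast
    moreover have "u (\<i> *\<^sub>C m) = 0" using u(2) sub csp_i[OF m] by blast
    ultimately show "g m = 0" by (simp add: g_def)
  qed
  moreover have "u (\<i> *\<^sub>C x) = 0" using u(2) span_base[of "\<i> *\<^sub>C x" ?S] by blast
  then have "g x = 1" using u(3) by (simp add: g_def)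
  ultimately show ?thesis using bl gC unfolding chom_def by blast
qed

lemma BX_intro: "bounded_linear T \<Longrightarrow> (\<And>c x. T (c *\<^sub>C x) = c *\<^sub>C T x) \<Longrightarrow> T \<in> BX"
  unfolding BX_def by blast

lemma BX_D: assumes "T \<in> BX" shows "bounded_linear T" "T (c *\<^sub>C x) = c *\<^sub>C T x"
  using assms unfolding BX_def by blast+

lemma BX_lin: "T \<in> BX \<Longrightarrow> linear T" using BX_D(1) bounded_linear.linear by blast

lemma rank1_BX: assumes "chom g" shows "(\<lambda>v. g v *\<^sub>C z) \<in> BX"
proof (rule BX_intro)
  show "bounded_linear (\<lambda>v. g v *\<^sub>C z)"
    using assms unfolding chom_def by (blast intro: bounded_linear_compose[OF bounded_linear_scaleC_left])
  show "g (c *\<^sub>C x) *\<^sub>C z = c *\<^sub>C g x *\<^sub>C z" for c x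
    using assms unfolding chom_def by (simp add: scaleC_scaleC)
qed

lemma BX_add: assumes "R1 \<in> BX" "R2 \<in> BX" shows "(\<lambda>v. R1 v + R2 v) \<in> BX"
proof (rule BX_intro)
  show "bounded_linear (\<lambda>v. R1 v + R2 v)" using assms BX_D(1) bounded_linear_add by blast
  show "R1 (c *\<^sub>C x) + R2 (c *\<^sub>C x) = c *\<^sub>C (R1 x + R2 x)" for c x
    using BX_D(2)[OF assms(1)] BX_D(2)[OF assms(2)] by (simp add: scaleC_add_right)
qed

lemma BX_scal: "(\<lambda>v. c *\<^sub>C v) \<in> BX"
  by (rule BX_intro[OF bounded_linear_scaleC]) (simp add: scaleC_scaleC mult.commute)

lemma BX_id: "(\<lambda>v. v) \<in> BX"
  using BX_scal[of 1] by (simp add: scaleC_one)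


lemma BX_comp: assumes "A \<in> BX" "R \<in> BX" shows "(\<lambda>x. A (R x)) \<in> BX"
proof (rule BX_intro)
  show "bounded_linear (\<lambda>x. A (R x))" using assms BX_D(1) bounded_linear_compose by blast
  show "A (R (c *\<^sub>C x)) = c *\<^sub>C A (R x)" for c x using BX_D(2)[OF assms(1)] BX_D(2)[OF assms(2)] by simp
qed

lemma BX_jordan: assumes "A \<in> BX" "R \<in> BX" shows "(\<lambda>x. A (R x) + R (A x)) \<in> BX"
  using BX_add[OF BX_comp[OF assms] BX_comp[OF assms(2,1)]] .

lemma BX_zero: assumes "T \<in> BX" shows "T 0 = 0"
  using linear_0[OF BX_lin[OF assms]] .
lemma BX_addD: assumes "T \<in> BX" shows "T (x + y) = T x + T y"
  using linear_add[OF BX_lin[OF assms]] .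
lemma BX_diffD: assumes "T \<in> BX" shows "T (x - y) = T x - T y"
  using linear_diff[OF BX_lin[OF assms]] .

lemma five_indep:
  assumes "v1 \<noteq> 0" "v2 \<notin> span {v1}" "v3 \<notin> span {v2, v1}" "v4 \<notin> span {v3, v2, v1}"
    "v5 \<notin> span {v4, v3, v2, v1}"
  shows "independent {v5, v4, v3, v2, v1} \<and> card {v5, v4, v3, v2, v1} = 5"
proof -
  have i1: "independent {v1}" using assms(1) by (simp add: independent_insert)
  have i2: "independent {v2, v1}" by (rule independent_insertI[OF assms(2) i1])
  have i3: "independent {v3, v2, v1}" by (rule independent_insertI[OF assms(3) i2])
  have i4: "independent {v4, v3, v2, v1}" by (rule independent_insertI[OF assms(4) i3])
  have i5: "independent {v5, v4, v3, v2, v1}" by (rule independent_insertI[OF assms(5) i4])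
  have n2: "v2 \<notin> {v1}"
  proof
    assume "v2 \<in> {v1}" then have "v2 \<in> span {v1}" by (rule span_base)
    with assms(2) show False by contradiction
  qed
  have n3: "v3 \<notin> {v2, v1}"
  proof
    assume "v3 \<in> {v2, v1}" then have "v3 \<in> span {v2, v1}" by (rule span_base)
    with assms(3) show False by contradiction
  qed
  have n4: "v4 \<notin> {v3, v2, v1}"
  proof
    assume "v4 \<in> {v3, v2, v1}" then have "v4 \<in> span {v3, v2, v1}" by (rule span_base)
    with assms(4) show False by contradiction
  qed
  have n5: "v5 \<notin> {v4, v3, v2, v1}"
  proof
    assume "v5 \<in> {v4, v3, v2, v1}" then have "v5 \<in> span {v4, v3, v2, v1}" by (rule span_base)
    with assms(5) show False by contradiction
  qed
  have "card {v5, v4, v3, v2, v1} = 5" using n2 n3 n4 n5 by (simp add: card_insert_if)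
  then show ?thesis using i5 by blast
qed

lemma five_contra:
  assumes "v1 \<noteq> 0" "v2 \<notin> span {v1}" "v3 \<notin> span {v2, v1}" "v4 \<notin> span {v3, v2, v1}"
    "v5 \<notin> span {v4, v3, v2, v1}" and V: "{v5, v4, v3, v2, v1} \<subseteq> K"
    and S: "finite S" "card S \<le> 4" "K \<subseteq> span S"
  shows False
proof -
  have i: "independent {v5, v4, v3, v2, v1}" and c: "card {v5, v4, v3, v2, v1} = 5"
    using five_indep[OF assms(1-5)] by blast+
  have sub: "{v5, v4, v3, v2, v1} \<subseteq> span S" using V S(3) by (rule subset_trans)
  have "card {v5, v4, v3, v2, v1} \<le> card S" using independent_span_bound[OF S(1) i sub] by blast
  then have "5 \<le> card S" using c by simp
  then show False using S(2) by simp
qed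

definition fam :: "('a::complex_banach \<Rightarrow> 'a) \<Rightarrow> 'a set set" where
  "fam A = {analytic_core (\<lambda>x. A (R x) + R (A x)) | R. R \<in> BX}"

definition Pk :: "('a::complex_banach \<Rightarrow> 'a) \<Rightarrow> bool" where
  "Pk A \<longleftrightarrow> (\<exists>K\<in>fam A. K \<noteq> {0}) \<and> (\<forall>K\<in>fam A. \<exists>S. finite S \<and> card S \<le> 4 \<and> K \<subseteq> span S)"

lemma card4: "card {a, b, c, d} \<le> 4"
  by (simp add: card_insert_if)

lemma Pk_rank_one:
  assumes A: "A \<in> BX" and r1: "rank_one A"
  shows "Pk A"
proof -
  obtain y where y: "y \<noteq> 0" "range A = {c *\<^sub>C y | c. True}" using r1 unfolding rank_one_def by blast
  have rg: "\<exists>c. A x = c *\<^sub>C y" for x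
  proof -
    have "A x \<in> range A" by simp
    then show ?thesis using y(2) by blast
  qed
  have first: "\<exists>K\<in>fam A. K \<noteq> {0}"
  proof -
    obtain \<mu> where mu: "A y = \<mu> *\<^sub>C y" using rg by blast
    show ?thesis
    proof (cases "\<mu> = 0")
      case False
      define R where "R = (\<lambda>v::'a. (1 / (2 * \<mu>)) *\<^sub>C v)"
      have R: "R \<in> BX" unfolding R_def by (rule BX_scal)
      have "A (R y) + R (A y) = y"
      proof -
        have "A (R y) = (1 / (2 * \<mu>)) *\<^sub>C (\<mu> *\<^sub>C y)" unfolding R_def using BX_D(2)[OF A] mu by simp
        moreover have "R (A y) = (1 / (2 * \<mu>)) *\<^sub>C (\<mu> *\<^sub>C y)" unfolding R_def using mu by simp
        moreover have "(1 / (2 * \<mu>)) *\<^sub>C (\<mu> *\<^sub>C y) = (1/2) *\<^sub>C y" using False by (simp add: scaleC_scaleC)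
        moreover have "(1/2) *\<^sub>C y + (1/2) *\<^sub>C y = y" by (simp add: scaleC_add_left[symmetric] scaleC_one)
        ultimately show ?thesis by simp
      qed
      then have "y \<in> analytic_core (\<lambda>x. A (R x) + R (A x))" by (rule core_eig)
      moreover have "analytic_core (\<lambda>x. A (R x) + R (A x)) \<in> fam A" unfolding fam_def using R by blast
      ultimately show ?thesis using y(1) by blast
    next
      case True
      then have Ay: "A y = 0" using mu by simp
      obtain x0 where x0: "A x0 = y"
      proof -
        have "1 *\<^sub>C y \<in> range A" using y(2) by blast
        then show ?thesis using that by (auto simp: scaleC_one)
      qed
      have "y \<notin> csp {}" using y(1) by simp
      then obtain g where g: "chom g" "g y = 1" using sep_complex[of "{}" y] by auto
      define R where "R = (\<lambda>v. g v *\<^sub>C x0)"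
      have R: "R \<in> BX" unfolding R_def by (rule rank1_BX[OF g(1)])
      have g0: "g 0 = 0" using g(1) unfolding chom_def using linear_0 bounded_linear.linear by blast
      have "A (R y) + R (A y) = y" unfolding R_def using g(2) Ay x0 g0 by (simp add: scaleC_one)
      then have "y \<in> analytic_core (\<lambda>x. A (R x) + R (A x))" by (rule core_eig)
      moreover have "analytic_core (\<lambda>x. A (R x) + R (A x)) \<in> fam A" unfolding fam_def using R by blast
      ultimately show ?thesis using y(1) by blast
    qed
  qed
  have second: "\<exists>S. finite S \<and> card S \<le> 4 \<and> K \<subseteq> span S" if K: "K \<in> fam A" for K
  proof -
    obtain R where R: "R \<in> BX" "K = analytic_core (\<lambda>x. A (R x) + R (A x))" using K unfolding fam_def by blast
    define S where "S = {y, \<i> *\<^sub>C y, R y, \<i> *\<^sub>C R y}"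
    have "K \<subseteq> span S"
    proof
      fix z assume "z \<in> K"
      then obtain x where x: "z = A (R x) + R (A x)" using core_sub_range R(2) by blast
      obtain c where c: "A (R x) = c *\<^sub>C y" using rg by blast
      obtain d where d: "A x = d *\<^sub>C y" using rg by blast
      have 1: "A (R x) \<in> span S" unfolding c scaleC_decomp[of c y] S_def
        by (intro span_add span_scale span_base) auto
      have "R (A x) = d *\<^sub>C R y" using d BX_D(2)[OF R(1)] by simp
      also have "\<dots> = Re d *\<^sub>R R y + Im d *\<^sub>R (\<i> *\<^sub>C R y)" by (rule scaleC_decomp)
      finally have e: "R (A x) = Re d *\<^sub>R R y + Im d *\<^sub>R (\<i> *\<^sub>C R y)" .
      have "Re d *\<^sub>R R y + Im d *\<^sub>R (\<i> *\<^sub>C R y) \<in> span S" unfolding S_def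
        by (intro span_add span_scale span_base) auto
      then have 2: "R (A x) \<in> span S" using e by simp
      show "z \<in> span S" unfolding x using 1 2 by (rule span_add)
    qed
    moreover have "finite S" "card S \<le> 4" unfolding S_def using card4 by auto
    ultimately show ?thesis by blast
  qed
  show ?thesis unfolding Pk_def using first second by blast
qed

lemma Pk_zero: "\<not> Pk (\<lambda>x::'a::complex_banach. 0)"
proof
  assume "Pk (\<lambda>x::'a. 0)"
  then obtain K where K: "K \<in> fam (\<lambda>x::'a. 0)" "K \<noteq> {0}" unfolding Pk_def by blast
  then obtain R where R: "R \<in> BX" "K = analytic_core (\<lambda>x. 0 + R 0)" unfolding fam_def by blast
  have "R 0 = 0" using BX_zero[OF R(1)] .
  then have K2: "K = analytic_core (\<lambda>x::'a. 0)" using R(2) by simp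
  have "K \<subseteq> {0}" using core_sub_range K2 by fastforce
  moreover have "0 \<in> K" unfolding K2 by (rule core_eig) simp
  ultimately show False using K(2) by blast
qed


lemma csp_in: "b \<in> S \<Longrightarrow> b \<in> csp S"
  using csp_superset by blast

lemma csp_single: "csp {x} = span {\<i> *\<^sub>C x, x}"
  unfolding csp_def D_def by (simp add: insert_commute)

lemma D_single: "D {x} = {\<i> *\<^sub>C x, x}"
  unfolding D_def by (simp add: insert_commute)

lemma csp_two: "csp {x2, x1} = span {\<i> *\<^sub>C x2, x2, \<i> *\<^sub>C x1, x1}"
proof -
  have "D {x2, x1} = {\<i> *\<^sub>C x2, x2, \<i> *\<^sub>C x1, x1}" unfolding D_def by auto
  then show ?thesis unfolding csp_def by simp
qed

lemma csp_lin_cancel: assumes "k \<notin> csp T" "u \<in> csp T" "c *\<^sub>C k + u \<in> csp T" shows "c = 0"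
proof -
  have "(c *\<^sub>C k + u) - u \<in> csp T" using assms(3,2) by (rule csp_diff)
  then have "c *\<^sub>C k \<in> csp T" by simp
  then show ?thesis using assms(1) csp_cancel by blast
qed

definition has5 :: "'a::complex_banach set \<Rightarrow> bool" where
  "has5 K \<longleftrightarrow> (\<exists>v1 v2 v3 v4 v5. v1 \<noteq> 0 \<and> v2 \<notin> span {v1} \<and> v3 \<notin> span {v2,v1} \<and>
     v4 \<notin> span {v3,v2,v1} \<and> v5 \<notin> span {v4,v3,v2,v1} \<and> {v5,v4,v3,v2,v1} \<subseteq> K)"

lemma has5_not4: assumes "has5 K" shows "\<not> (\<exists>S. finite S \<and> card S \<le> 4 \<and> K \<subseteq> span S)"
proof
  assume "\<exists>S. finite S \<and> card S \<le> 4 \<and> K \<subseteq> span S"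
  then obtain S where S: "finite S" "card S \<le> 4" "K \<subseteq> span S" by blast
  from assms obtain v1 v2 v3 v4 v5 where v: "v1 \<noteq> 0" "v2 \<notin> span {v1}" "v3 \<notin> span {v2,v1}"
     "v4 \<notin> span {v3,v2,v1}" "v5 \<notin> span {v4,v3,v2,v1}" "{v5,v4,v3,v2,v1} \<subseteq> K"
    unfolding has5_def by blast
  show False by (rule five_contra[OF v S])
qed

definition good :: "('a::complex_banach \<Rightarrow> 'a) \<Rightarrow> 'a \<Rightarrow> 'a \<Rightarrow> bool" where
  "good A x1 x2 \<longleftrightarrow> x1 \<noteq> 0 \<and> x2 \<notin> csp {x1} \<and> A x1 \<notin> csp {x2, x1} \<and> A x2 \<notin> csp {A x1, x2, x1}"

lemma constrI:
  assumes A: "A \<in> BX" and gd: "good A x1 x2"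
  shows "\<exists>R\<in>BX. has5 (analytic_core (\<lambda>x. A (R x) + R (A x)))"
proof -
  define y1 where "y1 = A x1"
  define y2 where "y2 = A x2"
  have h1: "x1 \<noteq> 0" and h2: "x2 \<notin> csp {x1}" and h3: "y1 \<notin> csp {x2, x1}" and h4: "y2 \<notin> csp {y1, x2, x1}"
    using gd unfolding good_def y1_def y2_def by blast+
  have h5: "y1 \<notin> csp {y2, x2, x1}"
  proof
    assume "y1 \<in> csp {y2, x2, x1}"
    then obtain c where c: "y1 - c *\<^sub>C y2 \<in> csp {x2, x1}" using csp_breakdown by blast
    show False
    proof (cases "c = 0")
      case True then show False using c h3 by simp
    next
      case False
      have eq: "(1/c) *\<^sub>C y1 - (1/c) *\<^sub>C (y1 - c *\<^sub>C y2) = y2"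
        using False by (simp add: scaleC_diff_right scaleC_scaleC scaleC_one)
      have "(1/c) *\<^sub>C y1 \<in> csp {y1, x2, x1}" by (rule csp_base_scale) simp
      moreover have "(1/c) *\<^sub>C (y1 - c *\<^sub>C y2) \<in> csp {y1, x2, x1}"
        using csp_scaleC[OF c] csp_mono[of "{x2, x1}" "{y1, x2, x1}"] by blast
      ultimately have "(1/c) *\<^sub>C y1 - (1/c) *\<^sub>C (y1 - c *\<^sub>C y2) \<in> csp {y1, x2, x1}" by (rule csp_diff)
      then show False using eq h4 by simp
    qed
  qed
  obtain g1 where g1: "chom g1" "\<And>m. m \<in> csp {y2, x2, x1} \<Longrightarrow> g1 m = 0" "g1 y1 = 1"
    using sep_complex[OF _ h5] by auto
  obtain g2 where g2: "chom g2" "\<And>m. m \<in> csp {y1, x2, x1} \<Longrightarrow> g2 m = 0" "g2 y2 = 1"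
    using sep_complex[OF _ h4] by auto
  have g1x1: "g1 x1 = 0" by (rule g1(2)[OF csp_in]) simp
  have g1x2: "g1 x2 = 0" by (rule g1(2)[OF csp_in]) simp
  have g1y2: "g1 y2 = 0" by (rule g1(2)[OF csp_in]) simp
  have g2x1: "g2 x1 = 0" by (rule g2(2)[OF csp_in]) simp
  have g2x2: "g2 x2 = 0" by (rule g2(2)[OF csp_in]) simp
  have g2y1: "g2 y1 = 0" by (rule g2(2)[OF csp_in]) simp
  have g1C: "g1 (c *\<^sub>C v) = c * g1 v" for c v using g1(1) unfolding chom_def by blast
  have g1lin: "linear g1" using g1(1) unfolding chom_def using bounded_linear.linear by blast
  define R where "R v = g1 v *\<^sub>C x1 + g2 v *\<^sub>C x2" for v
  have R: "R \<in> BX" unfolding R_def[abs_def] by (intro BX_add rank1_BX g1(1) g2(1))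
  define B where "B x = A (R x) + R (A x)" for x
  have B: "B \<in> BX" unfolding B_def[abs_def] by (rule BX_jordan[OF A R])
  have Rx1: "R x1 = 0" by (simp add: R_def g1x1 g2x1)
  have Rx2: "R x2 = 0" by (simp add: R_def g1x2 g2x2)
  have Ry1: "R y1 = x1" by (simp add: R_def g1(3) g2y1 scaleC_one)
  have Ry2: "R y2 = x2" by (simp add: R_def g2(3) g1y2 scaleC_one)
  have Bx1: "B x1 = x1" by (simp add: B_def Rx1 BX_zero[OF A] Ry1 flip: y1_def)
  have Bx2: "B x2 = x2" by (simp add: B_def Rx2 BX_zero[OF A] Ry2 flip: y2_def)
  define w where "w = R (A y1)"
  have wdef: "w = g1 (A y1) *\<^sub>C x1 + g2 (A y1) *\<^sub>C x2" by (simp add: w_def R_def)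
  have By1: "B y1 = y1 + w" by (simp add: B_def Ry1 w_def flip: y1_def)
  have Bw: "B w = w" unfolding wdef by (simp add: BX_addD[OF B] BX_D(2)[OF B] Bx1 Bx2)
  define C where "C v = v - g1 v *\<^sub>C w" for v
  have Cbl: "bounded_linear C" unfolding C_def[abs_def]
    by (intro bounded_linear_sub bounded_linear_ident bounded_linear_compose[OF bounded_linear_scaleC_left])
       (use g1(1) chom_def in blast)
  have Clin: "linear C" using Cbl bounded_linear.linear by blast
  define G where "G = {y1, \<i> *\<^sub>C x2, x2, \<i> *\<^sub>C x1, x1}"
  have Cx1: "C x1 = x1" by (simp add: C_def g1x1)
  have Cx2: "C x2 = x2" by (simp add: C_def g1x2)
  have Cix1: "C (\<i> *\<^sub>C x1) = \<i> *\<^sub>C x1" by (simp add: C_def g1C g1x1)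
  have Cix2: "C (\<i> *\<^sub>C x2) = \<i> *\<^sub>C x2" by (simp add: C_def g1C g1x2)
  have Cy1: "C y1 = y1 - w" by (simp add: C_def g1(3) scaleC_one)
  have wG: "w \<in> span G"
  proof -
    have "w = Re (g1 (A y1)) *\<^sub>R x1 + Im (g1 (A y1)) *\<^sub>R (\<i> *\<^sub>C x1) +
              (Re (g2 (A y1)) *\<^sub>R x2 + Im (g2 (A y1)) *\<^sub>R (\<i> *\<^sub>C x2))"
      unfolding wdef by (simp only: scaleC_decomp[of "g1 (A y1)" x1] scaleC_decomp[of "g2 (A y1)" x2])
    moreover have "Re (g1 (A y1)) *\<^sub>R x1 + Im (g1 (A y1)) *\<^sub>R (\<i> *\<^sub>C x1) +
              (Re (g2 (A y1)) *\<^sub>R x2 + Im (g2 (A y1)) *\<^sub>R (\<i> *\<^sub>C x2)) \<in> span G"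
      unfolding G_def by (intro span_add span_scale span_base) auto
    ultimately show ?thesis by simp
  qed
  have CG: "C ` G \<subseteq> span G"
  proof
    fix z assume "z \<in> C ` G"
    then obtain v where v: "v \<in> G" "z = C v" by blast
    have y1G: "y1 \<in> span G" unfolding G_def by (rule span_base) simp
    have "y1 - w \<in> span G" using y1G wG by (rule span_diff)
    then show "z \<in> span G" using v unfolding G_def
      by (auto simp: Cx1 Cx2 Cix1 Cix2 Cy1 intro: span_base)
  qed
  have Cinv: "C v \<in> span G" if "v \<in> span G" for v
  proof -
    have "C v \<in> C ` span G" using that by blast
    also have "C ` span G = span (C ` G)" using span_linear_image[OF Clin, of G] by simp
    also have "span (C ` G) \<subseteq> span G" using CG by (simp add: span_minimal)
    finally show ?thesis .
  qed
  have BC: "B (C v) = v" if "v \<in> span G" for v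
  proof (rule linear_eq_on_span[where f="\<lambda>v. B (C v)" and g="\<lambda>v. v", OF _ _ _ that])
    show "linear (\<lambda>v. B (C v))" using linear_compose[OF Clin BX_lin[OF B]] by (simp add: o_def)
    show "linear (\<lambda>v. v)" by (rule linear_id[unfolded id_def])
    fix z assume "z \<in> G"
    then show "B (C z) = z" unfolding G_def
      by (auto simp: Cx1 Cx2 Cix1 Cix2 Cy1 Bx1 Bx2 BX_D(2)[OF B] BX_diffD[OF B] By1 Bw)
  qed
  have VK: "span G \<subseteq> analytic_core B" by (rule core_sub[OF Cbl Cinv BC])
  have f2: "\<i> *\<^sub>C x1 \<notin> span {x1}"
  proof -
    have "x1 \<notin> csp {}" using h1 by simp
    from i_not_in_span[OF this] show ?thesis by simp
  qed
  have f3: "x2 \<notin> span {\<i> *\<^sub>C x1, x1}" using h2 by (simp add: csp_single)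
  have f4: "\<i> *\<^sub>C x2 \<notin> span {x2, \<i> *\<^sub>C x1, x1}"
    using i_not_in_span[OF h2] by (simp add: D_single)
  have f5: "y1 \<notin> span {\<i> *\<^sub>C x2, x2, \<i> *\<^sub>C x1, x1}" using h3 by (simp add: csp_two)
  have "G \<subseteq> span G" by (rule span_superset)
  then have "G \<subseteq> analytic_core B" using VK by (rule subset_trans)
  then have "has5 (analytic_core B)" unfolding has5_def G_def
    using h1 f2 f3 f4 f5 by blast
  then show ?thesis using R unfolding B_def[abs_def] by blast
qed


lemma infc: assumes inf: "\<And>T::'a::complex_banach set. finite T \<Longrightarrow> \<exists>x. x \<notin> span T" and T: "finite T"
  shows "\<exists>x::'a. x \<notin> csp T"
  unfolding csp_def using inf[OF finite_D[OF T]] .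

lemma BX_minus_scal: assumes A: "A \<in> BX" shows "linear (\<lambda>x. A x - lm *\<^sub>C x)"
proof -
  have "bounded_linear (\<lambda>x. A x - lm *\<^sub>C x)"
    by (rule bounded_linear_sub[OF BX_D(1)[OF A] bounded_linear_scaleC])
  then show ?thesis using bounded_linear.linear by blast
qed

lemma constrII:
  fixes A :: "'a::complex_banach \<Rightarrow> 'a"
  assumes A: "A \<in> BX" and F0: "finite F0" and lam: "\<And>x. A x - lm *\<^sub>C x \<in> csp F0" and ne: "lm \<noteq> 0"
    and inf: "\<And>T::'a::complex_banach set. finite T \<Longrightarrow> \<exists>x. x \<notin> span T"
  shows "\<exists>R\<in>BX. has5 (analytic_core (\<lambda>x::'a. A (R x) + R (A x)))"
proof -
  define N where "N x = A x - lm *\<^sub>C x" for x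
  have Nl: "linear N" unfolding N_def[abs_def] by (rule BX_minus_scal[OF A])
  have kf: "\<exists>k. N k = 0 \<and> k \<notin> span T" if "finite T" for T :: "'a set"
    by (rule ker_fresh[OF Nl finite_D[OF F0] _ inf that]) (use lam in \<open>simp add: N_def csp_def\<close>)
  obtain v1 where v1: "N v1 = 0" "v1 \<notin> span {}" using kf[of "{}"] by auto
  obtain v2 where v2: "N v2 = 0" "v2 \<notin> span {v1}" using kf[of "{v1}"] by auto
  obtain v3 where v3: "N v3 = 0" "v3 \<notin> span {v2, v1}" using kf[of "{v2, v1}"] by auto
  obtain v4 where v4: "N v4 = 0" "v4 \<notin> span {v3, v2, v1}" using kf[of "{v3, v2, v1}"] by auto
  obtain v5 where v5: "N v5 = 0" "v5 \<notin> span {v4, v3, v2, v1}" using kf[of "{v4, v3, v2, v1}"] by auto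
  define R where "R v = (1 / (2 * lm)) *\<^sub>C v" for v :: 'a
  have R: "R \<in> BX" unfolding R_def[abs_def] by (rule BX_scal)
  have eig: "v \<in> analytic_core (\<lambda>x. A (R x) + R (A x))" if "N v = 0" for v
  proof (rule core_eig)
    have Av: "A v = lm *\<^sub>C v" using that by (simp add: N_def)
    have "A (R v) = (1 / (2 * lm)) *\<^sub>C (lm *\<^sub>C v)" unfolding R_def using BX_D(2)[OF A] Av by simp
    moreover have "R (A v) = (1 / (2 * lm)) *\<^sub>C (lm *\<^sub>C v)" unfolding R_def using Av by simp
    moreover have "(1 / (2 * lm)) *\<^sub>C (lm *\<^sub>C v) = (1/2) *\<^sub>C v" using ne by (simp add: scaleC_scaleC)
    moreover have "(1/2) *\<^sub>C v + (1/2) *\<^sub>C v = v" by (simp add: scaleC_add_left[symmetric] scaleC_one)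
    ultimately show "A (R v) + R (A v) = v" by simp
  qed
  have "v1 \<noteq> 0" using v1(2) by auto
  moreover have "{v5, v4, v3, v2, v1} \<subseteq> analytic_core (\<lambda>x. A (R x) + R (A x))"
    using eig v1(1) v2(1) v3(1) v4(1) v5(1) by blast
  ultimately have "has5 (analytic_core (\<lambda>x. A (R x) + R (A x)))"
    unfolding has5_def using v2(2) v3(2) v4(2) v5(2) by blast
  then show ?thesis using R by blast
qed

lemma goodpair_finrank:
  fixes A :: "'a::complex_banach \<Rightarrow> 'a"
  assumes A: "A \<in> BX" and F0: "finite F0" and rg: "\<And>x. A x \<in> csp F0"
    and inf: "\<And>T::'a::complex_banach set. finite T \<Longrightarrow> \<exists>x. x \<notin> span T"
    and y1: "A x1 \<noteq> 0" and y2: "A x2 \<notin> csp {A x1}"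
  shows "\<exists>u v. good A u v"
proof -
  have Al: "linear A" by (rule BX_lin[OF A])
  have kf: "\<exists>k. A k = 0 \<and> k \<notin> csp T" if "finite T" for T :: "'a set"
    unfolding csp_def
    by (rule ker_fresh[OF Al finite_D[OF F0] _ inf finite_D[OF that]]) (use rg in \<open>simp add: csp_def\<close>)
  define T1 where "T1 = {A x2, A x1, x2, x1}"
  obtain k1 where k1: "A k1 = 0" "k1 \<notin> csp T1" using kf[of T1] by (auto simp: T1_def)
  define T2 where "T2 = insert k1 T1"
  obtain k2 where k2: "A k2 = 0" "k2 \<notin> csp T2" using kf[of T2] by (auto simp: T2_def T1_def)
  have sub12: "csp T1 \<subseteq> csp T2" by (rule csp_mono) (auto simp: T2_def)
  define u1 where "u1 = x1 + k1"
  define u2 where "u2 = x2 + k2"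
  have Au1: "A u1 = A x1" by (simp add: u1_def BX_addD[OF A] k1(1))
  have Au2: "A u2 = A x2" by (simp add: u2_def BX_addD[OF A] k2(1))
  have inT1: "A x2 \<in> csp T1" "A x1 \<in> csp T1" "x2 \<in> csp T1" "x1 \<in> csp T1"
    by (rule csp_in, simp add: T1_def)+
  have inT2: "A x2 \<in> csp T2" "A x1 \<in> csp T2" "x2 \<in> csp T2" "x1 \<in> csp T2" "k1 \<in> csp T2"
    by (rule csp_in, simp add: T2_def T1_def)+
  have elim: "b = 0 \<and> a = 0" if h: "z - b *\<^sub>C u2 - a *\<^sub>C u1 = 0" and z: "z \<in> csp T1" for z a b
  proof -
    have e1: "(- b) *\<^sub>C k2 + (z - b *\<^sub>C x2 - a *\<^sub>C x1 - a *\<^sub>C k1) = 0"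
      using h by (simp add: u1_def u2_def scaleC_add_right scaleC_minus_left algebra_simps)
    have m1: "z - b *\<^sub>C x2 - a *\<^sub>C x1 - a *\<^sub>C k1 \<in> csp T2"
      using z sub12 inT2 by (intro csp_diff csp_scaleC) auto
    have "(- b) *\<^sub>C k2 + (z - b *\<^sub>C x2 - a *\<^sub>C x1 - a *\<^sub>C k1) \<in> csp T2" unfolding e1 by (rule csp_zero)
    then have "- b = 0" by (rule csp_lin_cancel[OF k2(2) m1])
    then have b: "b = 0" by simp
    have e2: "(- a) *\<^sub>C k1 + (z - a *\<^sub>C x1) = 0"
      using e1 b by (simp add: scaleC_minus_left algebra_simps)
    have m2: "z - a *\<^sub>C x1 \<in> csp T1" using z inT1 by (intro csp_diff csp_scaleC) auto
    have "(- a) *\<^sub>C k1 + (z - a *\<^sub>C x1) \<in> csp T1" unfolding e2 by (rule csp_zero)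
    then have "- a = 0" by (rule csp_lin_cancel[OF k1(2) m2])
    then show ?thesis using b by simp
  qed
  have g1: "u1 \<noteq> 0"
  proof
    assume "u1 = 0"
    then have "0 - 0 *\<^sub>C u2 - 1 *\<^sub>C u1 = 0" by simp
    then have "(0::complex) = 0 \<and> (1::complex) = 0" by (rule elim[OF _ csp_zero])
    then show False by simp
  qed
  have g2: "u2 \<notin> csp {u1}"
  proof
    assume "u2 \<in> csp {u1}"
    then obtain c where "u2 - c *\<^sub>C u1 \<in> csp {}" using csp_breakdown[of u2 u1 "{}"] by blast
    then have "u2 - c *\<^sub>C u1 = 0" by simp
    then have "0 - (-1) *\<^sub>C u2 - c *\<^sub>C u1 = 0" by (simp add: scaleC_minus_left scaleC_one)
    then have "(-1::complex) = 0 \<and> c = 0" by (rule elim[OF _ csp_zero])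
    then show False by simp
  qed
  have g3: "A u1 \<notin> csp {u2, u1}"
  proof
    assume "A u1 \<in> csp {u2, u1}"
    then obtain b where "A x1 - b *\<^sub>C u2 \<in> csp {u1}" using csp_breakdown Au1 by (metis insert_commute)
    then obtain a where "A x1 - b *\<^sub>C u2 - a *\<^sub>C u1 \<in> csp {}" using csp_breakdown[of _ u1 "{}"] by blast
    then have "A x1 - b *\<^sub>C u2 - a *\<^sub>C u1 = 0" by simp
    then have "b = 0 \<and> a = 0" using elim inT1 by blast
    then show False using \<open>A x1 - b *\<^sub>C u2 - a *\<^sub>C u1 = 0\<close> y1 by simp
  qed
  have g4: "A u2 \<notin> csp {A u1, u2, u1}"
  proof
    assume "A u2 \<in> csp {A u1, u2, u1}"
    then obtain c where "A x2 - c *\<^sub>C A x1 \<in> csp {u2, u1}" using csp_breakdown Au1 Au2 by metis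
    then obtain b where "A x2 - c *\<^sub>C A x1 - b *\<^sub>C u2 \<in> csp {u1}" using csp_breakdown by blast
    then obtain a where "A x2 - c *\<^sub>C A x1 - b *\<^sub>C u2 - a *\<^sub>C u1 \<in> csp {}" using csp_breakdown[of _ u1 "{}"] by blast
    then have h: "(A x2 - c *\<^sub>C A x1) - b *\<^sub>C u2 - a *\<^sub>C u1 = 0" by simp
    have "A x2 - c *\<^sub>C A x1 \<in> csp T1" using inT1 by (intro csp_diff csp_scaleC) auto
    then have "b = 0 \<and> a = 0" using elim h by blast
    then have "A x2 - c *\<^sub>C A x1 = 0" using h by simp
    then have "A x2 - c *\<^sub>C A x1 \<in> csp {}" by simp
    then have "A x2 \<in> csp {A x1}" using csp_breakdown[of "A x2" "A x1" "{}"] by blast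
    then show False using y2 by blast
  qed
  have "good A u1 u2" unfolding good_def using g1 g2 g3 g4 by blast
  then show ?thesis by blast
qed


lemma structure_lemma:
  fixes A :: "'a::complex_banach \<Rightarrow> 'a"
  assumes A: "A \<in> BX" and inf: "\<And>T::'a set. finite T \<Longrightarrow> \<exists>x. x \<notin> span T"
    and ng: "\<And>u v. \<not> good A u v"
  shows "\<exists>lm F0. finite F0 \<and> (\<forall>x. A x - lm *\<^sub>C x \<in> csp F0)"
proof -
  have Cx: "A (c *\<^sub>C x) = c *\<^sub>C A x" for c x using BX_D(2)[OF A] .
  obtain F0 :: "'a set" where F0: "finite F0" and H: "\<And>x. x \<notin> csp F0 \<Longrightarrow> \<exists>c. A x - c *\<^sub>C x \<in> csp F0"
  proof (cases "\<exists>u. A u \<notin> csp {u}")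
    case True
    then obtain u where u: "A u \<notin> csp {u}" by blast
    have u0: "u \<noteq> 0"
    proof
      assume "u = 0" then have "A u = 0" using BX_zero[OF A] by simp
      then show False using u csp_zero[of "{u}"] by simp
    qed
    have "\<exists>c. A x - c *\<^sub>C x \<in> csp {A u, u}" if x: "x \<notin> csp {A u, u}" for x
    proof -
      have a: "x \<notin> csp {u}" using x csp_mono[of "{u}" "{A u, u}"] by blast
      have b: "A u \<notin> csp {x, u}"
      proof
        assume "A u \<in> csp {x, u}"
        then obtain c where c: "A u - c *\<^sub>C x \<in> csp {u}" using csp_breakdown by blast
        show False
        proof (cases "c = 0")
          case True then show False using c u by simp
        next
          case False
          have eq: "(1/c) *\<^sub>C A u - (1/c) *\<^sub>C (A u - c *\<^sub>C x) = x"
            using False by (simp add: scaleC_diff_right scaleC_scaleC scaleC_one)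
          have "(1/c) *\<^sub>C A u \<in> csp {A u, u}" by (rule csp_base_scale) simp
          moreover have "(1/c) *\<^sub>C (A u - c *\<^sub>C x) \<in> csp {A u, u}"
            using csp_scaleC[OF c] csp_mono[of "{u}" "{A u, u}"] by blast
          ultimately have "(1/c) *\<^sub>C A u - (1/c) *\<^sub>C (A u - c *\<^sub>C x) \<in> csp {A u, u}" by (rule csp_diff)
          then show False using eq x by simp
        qed
      qed
      have "\<not> good A u x" by (rule ng)
      then have "A x \<in> csp {A u, x, u}" unfolding good_def using u0 a b by blast
      moreover have "{A u, x, u} = insert x {A u, u}" by auto
      ultimately have "A x \<in> csp (insert x {A u, u})" by simp
      then show ?thesis using csp_breakdown by blast
    qed
    then show ?thesis using that[of "{A u, u}"] by blast
  next
    case False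
    have "\<exists>c. A x - c *\<^sub>C x \<in> csp {}" if "x \<notin> csp {}" for x
    proof -
      have "A x \<in> csp (insert x {})" using False by blast
      then show ?thesis using csp_breakdown by blast
    qed
    then show ?thesis using that[of "{}"] by blast
  qed
  define lam where "lam x = (SOME c. A x - c *\<^sub>C x \<in> csp F0)" for x
  have lamP: "A x - lam x *\<^sub>C x \<in> csp F0" if "x \<notin> csp F0" for x
    unfolding lam_def using H[OF that] by (rule someI_ex)
  have uniq: "c = c'" if x: "x \<notin> csp F0" and c: "A x - c *\<^sub>C x \<in> csp F0" and c': "A x - c' *\<^sub>C x \<in> csp F0" for x c c'
  proof -
    have "(A x - c *\<^sub>C x) - (A x - c' *\<^sub>C x) \<in> csp F0" using c c' by (rule csp_diff)
    moreover have "(A x - c *\<^sub>C x) - (A x - c' *\<^sub>C x) = (c' - c) *\<^sub>C x" by (simp add: scaleC_diff_left)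
    ultimately have "(c' - c) *\<^sub>C x \<in> csp F0" by simp
    then have "c' - c = 0" using csp_cancel x by blast
    then show ?thesis by simp
  qed
  have C1: "lam x = lam x'" if x: "x \<notin> csp F0" and x': "x' \<notin> csp (insert x F0)" for x x'
  proof -
    have sub: "csp F0 \<subseteq> csp (insert x F0)" by (rule csp_mono) auto
    have x'0: "x' \<notin> csp F0" using x' sub by blast
    have xin: "x \<in> csp (insert x F0)" by (rule csp_in) simp
    have s0: "x + x' \<notin> csp F0"
    proof
      assume "x + x' \<in> csp F0"
      then have "x + x' \<in> csp (insert x F0)" using sub by blast
      then have "(x + x') - x \<in> csp (insert x F0)" using xin by (rule csp_diff)
      then show False using x' by simp
    qed
    define c where "c = lam x"
    define c' where "c' = lam x'"
    define c'' where "c'' = lam (x + x')"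
    have e: "A x - c *\<^sub>C x \<in> csp F0" "A x' - c' *\<^sub>C x' \<in> csp F0" "A (x + x') - c'' *\<^sub>C (x + x') \<in> csp F0"
      unfolding c_def c'_def c''_def using lamP x x'0 s0 by blast+
    have "(A x - c *\<^sub>C x) + (A x' - c' *\<^sub>C x') - (A (x + x') - c'' *\<^sub>C (x + x')) \<in> csp F0"
      by (rule csp_diff[OF csp_add[OF e(1) e(2)] e(3)])
    moreover have "(A x - c *\<^sub>C x) + (A x' - c' *\<^sub>C x') - (A (x + x') - c'' *\<^sub>C (x + x'))
        = (c'' - c') *\<^sub>C x' + (c'' - c) *\<^sub>C x"
      by (simp add: BX_addD[OF A] scaleC_add_right scaleC_diff_left algebra_simps)
    ultimately have m: "(c'' - c') *\<^sub>C x' + (c'' - c) *\<^sub>C x \<in> csp F0" by simp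
    have "(c'' - c') *\<^sub>C x' + (c'' - c) *\<^sub>C x \<in> csp (insert x F0)" using m sub by blast
    moreover have "(c'' - c) *\<^sub>C x \<in> csp (insert x F0)" by (rule csp_scaleC[OF xin])
    ultimately have "c'' - c' = 0" by (rule csp_lin_cancel[OF x', rotated])
    then have cc: "c'' = c'" by simp
    then have "(c'' - c) *\<^sub>C x \<in> csp F0" using m by simp
    then have "c'' - c = 0" using csp_cancel x by blast
    then show ?thesis using cc unfolding c_def c'_def c''_def by simp
  qed
  have C2: "lam x = lam x'" if x: "x \<notin> csp F0" and x': "x' \<notin> csp F0" for x x'
  proof -
    obtain z where z: "z \<notin> csp (insert x (insert x' F0))" using infc[OF inf, of "insert x (insert x' F0)"] F0 by auto
    have "z \<notin> csp (insert x F0)" using z csp_mono[of "insert x F0" "insert x (insert x' F0)"] by blast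
    then have 1: "lam x = lam z" by (rule C1[OF x])
    have "z \<notin> csp (insert x' F0)" using z csp_mono[of "insert x' F0" "insert x (insert x' F0)"] by blast
    then have 2: "lam x' = lam z" by (rule C1[OF x'])
    show ?thesis using 1 2 by simp
  qed
  obtain xs where xs: "xs \<notin> csp F0" using infc[OF inf F0] by blast
  define lm where "lm = lam xs"
  have all: "A x - lm *\<^sub>C x \<in> csp F0" for x
  proof (cases "x \<in> csp F0")
    case False
    then show ?thesis using lamP[OF False] C2[OF False xs] unfolding lm_def by simp
  next
    case True
    have s: "x + xs \<notin> csp F0"
    proof
      assume "x + xs \<in> csp F0"
      then have "(x + xs) - x \<in> csp F0" using True by (rule csp_diff)
      then show False using xs by simp
    qed
    have 1: "A (x + xs) - lm *\<^sub>C (x + xs) \<in> csp F0" using lamP[OF s] C2[OF s xs] unfolding lm_def by simp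
    have 2: "A xs - lm *\<^sub>C xs \<in> csp F0" using lamP[OF xs] unfolding lm_def by simp
    have "(A (x + xs) - lm *\<^sub>C (x + xs)) - (A xs - lm *\<^sub>C xs) \<in> csp F0" using 1 2 by (rule csp_diff)
    moreover have "(A (x + xs) - lm *\<^sub>C (x + xs)) - (A xs - lm *\<^sub>C xs) = A x - lm *\<^sub>C x"
      by (simp add: BX_addD[OF A] scaleC_add_right)
    ultimately show ?thesis by simp
  qed
  show ?thesis using F0 all by blast
qed

lemma hard:
  fixes A :: "'a::complex_banach \<Rightarrow> 'a"
  assumes A: "A \<in> BX" and inf: "\<And>T::'a set. finite T \<Longrightarrow> \<exists>x. x \<notin> span T"
    and y1: "A x1 \<noteq> 0" and y2: "A x2 \<notin> csp {A x1}"
  shows "\<exists>R\<in>BX. has5 (analytic_core (\<lambda>x. A (R x) + R (A x)))"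
proof (cases "\<exists>u v. good A u v")
  case True
  then obtain u v where "good A u v" by blast
  then show ?thesis by (rule constrI[OF A])
next
  case False
  then have ng: "\<And>u v. \<not> good A u v" by blast
  obtain lm F0 where F0: "finite F0" and lm: "\<And>x. A x - lm *\<^sub>C x \<in> csp F0"
    using structure_lemma[OF A inf ng] by blast
  show ?thesis
  proof (cases "lm = 0")
    case False
    show ?thesis by (rule constrII[OF A F0 lm False inf])
  next
    case True
    then have "\<And>x. A x \<in> csp F0" using lm by simp
    from goodpair_finrank[OF A F0 this inf y1 y2] show ?thesis using ng by blast
  qed
qed

lemma Pk_iff:
  fixes A :: "'a::complex_banach \<Rightarrow> 'a"
  assumes A: "A \<in> BX" and infd: "\<not> complex_finite_dim TYPE('a)"
  shows "Pk A \<longleftrightarrow> rank_one A"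
proof
  assume r: "rank_one A" show "Pk A" by (rule Pk_rank_one[OF A r])
next
  assume P: "Pk A"
  have inf: "\<And>T::'a set. finite T \<Longrightarrow> \<exists>x. x \<notin> span T" using infdim_real[OF infd] by blast
  show "rank_one A"
  proof (rule ccontr)
    assume nr: "\<not> rank_one A"
    show False
    proof (cases "\<exists>x1. A x1 \<noteq> 0")
      case False
      then have "A = (\<lambda>x. 0)" by auto
      then show False using P Pk_zero[where 'a='a] by simp
    next
      case True
      then obtain x1 where x1: "A x1 \<noteq> 0" by blast
      show False
      proof (cases "\<forall>x. A x \<in> csp {A x1}")
        case True
        have "range A = {c *\<^sub>C A x1 | c. True}"
        proof
          show "range A \<subseteq> {c *\<^sub>C A x1 | c. True}"
          proof
            fix z assume "z \<in> range A"
            then obtain x where z: "z = A x" by blast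
            have "A x \<in> csp (insert (A x1) {})" using True by simp
            then obtain c where "A x - c *\<^sub>C A x1 \<in> csp {}" using csp_breakdown by blast
            then have "A x = c *\<^sub>C A x1" by simp
            then show "z \<in> {c *\<^sub>C A x1 | c. True}" using z by blast
          qed
          show "{c *\<^sub>C A x1 | c. True} \<subseteq> range A"
          proof
            fix z assume "z \<in> {c *\<^sub>C A x1 | c. True}"
            then obtain c where "z = c *\<^sub>C A x1" by blast
            then have "z = A (c *\<^sub>C x1)" using BX_D(2)[OF A] by simp
            then show "z \<in> range A" by simp
          qed
        qed
        then have "rank_one A" unfolding rank_one_def using x1 by blast
        then show False using nr by blast
      next
        case False
        then obtain x2 where x2: "A x2 \<notin> csp {A x1}" by blast
        obtain R where R: "R \<in> BX" "has5 (analytic_core (\<lambda>x. A (R x) + R (A x)))"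
          using hard[OF A inf x1 x2] by blast
        have "analytic_core (\<lambda>x. A (R x) + R (A x)) \<in> fam A" unfolding fam_def using R(1) by blast
        then have "\<exists>S. finite S \<and> card S \<le> 4 \<and> analytic_core (\<lambda>x. A (R x) + R (A x)) \<subseteq> span S"
          using P unfolding Pk_def by blast
        then show False using has5_not4[OF R(2)] by blast
      qed
    qed
  qed
qed

theorem mainTheorem6:
  fixes \<phi> :: "('a::complex_banach \<Rightarrow> 'a) \<Rightarrow> ('a \<Rightarrow> 'a)"
  assumes inf_dim: "\<not> complex_finite_dim TYPE('a)"
    and maps: "\<forall>T\<in>BX. \<phi> T \<in> BX"
    and surj: "\<forall>S\<in>BX. \<exists>T\<in>BX. \<phi> T = S"
    and pres: "\<forall>T\<in>BX. \<forall>S\<in>BX.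
      analytic_core (\<lambda>x. \<phi> T (\<phi> S x) + \<phi> S (\<phi> T x)) = analytic_core (\<lambda>x. T (S x) + S (T x))"
    and F: "F \<in> BX"
  shows "rank_one (\<phi> F) \<longleftrightarrow> rank_one F"
proof -
  have phiF: "\<phi> F \<in> BX" using maps F by blast
  have "fam (\<phi> F) = fam F"
  proof
    show "fam (\<phi> F) \<subseteq> fam F"
    proof
      fix K assume "K \<in> fam (\<phi> F)"
      then obtain R where R: "R \<in> BX" "K = analytic_core (\<lambda>x. \<phi> F (R x) + R (\<phi> F x))"
        unfolding fam_def by blast
      obtain S where S: "S \<in> BX" "\<phi> S = R" using surj R(1) by blast
      have "K = analytic_core (\<lambda>x. F (S x) + S (F x))" using R(2) S(2) pres F S(1) by blast
      then show "K \<in> fam F" unfolding fam_def using S(1) by blast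
    qed
  next
    show "fam F \<subseteq> fam (\<phi> F)"
    proof
      fix K assume "K \<in> fam F"
      then obtain S where S: "S \<in> BX" "K = analytic_core (\<lambda>x. F (S x) + S (F x))"
        unfolding fam_def by blast
      have "K = analytic_core (\<lambda>x. \<phi> F (\<phi> S x) + \<phi> S (\<phi> F x))" using S pres F by simp
      moreover have "\<phi> S \<in> BX" using maps S(1) by blast
      ultimately show "K \<in> fam (\<phi> F)" unfolding fam_def by blast
    qed
  qed
  then have "Pk (\<phi> F) \<longleftrightarrow> Pk F" unfolding Pk_def by simp
  then show ?thesis using Pk_iff[OF phiF inf_dim] Pk_iff[OF F inf_dim] by simp
qed

end
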